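(* Let $G$ be a group with identity $\mathbf{1}$. If the complete graph $\mathrm{Cay}(G; G\setminus\{\mathbf{1}\})$ is CCA, then it is strongly CCA.
   Context: For an inverse-closed subset $S$ of $G$, $\mathrm{Cay}(G;S)$ has vertex set $G$ and an edge from $g$ to $gs$ for each $g\in G$, $s\in S$; the edge $g$—$gs$ is coloured $\{s,s^{-1}\}$. A graph automorphism is colour-preserving if it maps every edge to an edge of the same colour, and colour-permuting if whenever two edges have the same colour their images also have the same colour. A map $\varphi\colon G\to G$ is affine if $\varphi(x)=\alpha(gx)$ for some $\alpha\in\mathrm{Aut}(G)$, $g\in G$. A Cayley graph is CCA if all its colour-preserving automorphisms are affine, and strongly CCA if all its colour-permuting automorphisms are affine. *)

theory Defs
  imports "HOL-Algebra.Group"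
begin

text \<open>Cayley graph Cay(G;S): vertex set carrier G, x adjacent to y iff y = x s for some s in S,
  i.e. iff inv x \<otimes> y \<in> S (S inverse-closed makes this symmetric).\<close>
definition cay_adj :: "('a, 'b) monoid_scheme \<Rightarrow> 'a set \<Rightarrow> 'a \<Rightarrow> 'a \<Rightarrow> bool" where
  "cay_adj G S x y \<longleftrightarrow> x \<in> carrier G \<and> y \<in> carrier G \<and> inv\<^bsub>G\<^esub> x \<otimes>\<^bsub>G\<^esub> y \<in> S"

definition cay_colour :: "('a, 'b) monoid_scheme \<Rightarrow> 'a \<Rightarrow> 'a \<Rightarrow> 'a set" where
  "cay_colour G x y = {inv\<^bsub>G\<^esub> x \<otimes>\<^bsub>G\<^esub> y, inv\<^bsub>G\<^esub> (inv\<^bsub>G\<^esub> x \<otimes>\<^bsub>G\<^esub> y)}"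

definition inverse_closed :: "('a, 'b) monoid_scheme \<Rightarrow> 'a set \<Rightarrow> bool" where
  "inverse_closed G S \<longleftrightarrow> S \<subseteq> carrier G \<and> (\<forall>s\<in>S. inv\<^bsub>G\<^esub> s \<in> S)"

definition cay_aut :: "('a, 'b) monoid_scheme \<Rightarrow> 'a set \<Rightarrow> ('a \<Rightarrow> 'a) \<Rightarrow> bool" where
  "cay_aut G S \<phi> \<longleftrightarrow> bij_betw \<phi> (carrier G) (carrier G) \<and>
     (\<forall>x\<in>carrier G. \<forall>y\<in>carrier G. cay_adj G S x y \<longleftrightarrow> cay_adj G S (\<phi> x) (\<phi> y))"

definition colour_preserving :: "('a, 'b) monoid_scheme \<Rightarrow> 'a set \<Rightarrow> ('a \<Rightarrow> 'a) \<Rightarrow> bool" where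
  "colour_preserving G S \<phi> \<longleftrightarrow> cay_aut G S \<phi> \<and>
     (\<forall>x y. cay_adj G S x y \<longrightarrow> cay_colour G (\<phi> x) (\<phi> y) = cay_colour G x y)"

definition colour_permuting :: "('a, 'b) monoid_scheme \<Rightarrow> 'a set \<Rightarrow> ('a \<Rightarrow> 'a) \<Rightarrow> bool" where
  "colour_permuting G S \<phi> \<longleftrightarrow> cay_aut G S \<phi> \<and>
     (\<forall>x y u v. cay_adj G S x y \<longrightarrow> cay_adj G S u v \<longrightarrow> cay_colour G x y = cay_colour G u v \<longrightarrow>
        cay_colour G (\<phi> x) (\<phi> y) = cay_colour G (\<phi> u) (\<phi> v))"

definition affine :: "('a, 'b) monoid_scheme \<Rightarrow> ('a \<Rightarrow> 'a) \<Rightarrow> bool" where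
  "affine G \<phi> \<longleftrightarrow> (\<exists>\<alpha> g. \<alpha> \<in> iso G G \<and> g \<in> carrier G \<and>
     (\<forall>x\<in>carrier G. \<phi> x = \<alpha> (g \<otimes>\<^bsub>G\<^esub> x)))"

definition CCA :: "('a, 'b) monoid_scheme \<Rightarrow> 'a set \<Rightarrow> bool" where
  "CCA G S \<longleftrightarrow> (\<forall>\<phi>. colour_preserving G S \<phi> \<longrightarrow> affine G \<phi>)"

definition strongly_CCA :: "('a, 'b) monoid_scheme \<Rightarrow> 'a set \<Rightarrow> bool" where
  "strongly_CCA G S \<longleftrightarrow> (\<forall>\<phi>. colour_permuting G S \<phi> \<longrightarrow> affine G \<phi>)"

end

theory Submission
  imports Defs
begin

definition pmaut :: "('a, 'b) monoid_scheme \<Rightarrow> ('a \<Rightarrow> 'a) \<Rightarrow> bool" where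
  "pmaut G \<beta> \<longleftrightarrow> (\<forall>x\<in>carrier G. \<beta> x \<in> carrier G) \<and>
     (\<forall>x\<in>carrier G. \<forall>y\<in>carrier G. \<beta> (x \<otimes>\<^bsub>G\<^esub> y) = \<beta> x \<otimes>\<^bsub>G\<^esub> \<beta> y) \<and>
     (\<forall>x\<in>carrier G. \<beta> x = x \<or> \<beta> x = inv\<^bsub>G\<^esub> x)"

context group begin

lemma lc1 [simp]: "x \<in> carrier G \<Longrightarrow> y \<in> carrier G \<Longrightarrow> x \<otimes> (inv x \<otimes> y) = y"
  by (simp add: m_assoc[symmetric])
lemma lc2 [simp]: "x \<in> carrier G \<Longrightarrow> y \<in> carrier G \<Longrightarrow> inv x \<otimes> (x \<otimes> y) = y"
  by (simp add: m_assoc[symmetric])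

lemmas gs = m_assoc inv_mult_group

lemma pm_closed: "pmaut G b \<Longrightarrow> x \<in> carrier G \<Longrightarrow> b x \<in> carrier G"
  by (simp add: pmaut_def)
lemma pm_mult: "pmaut G b \<Longrightarrow> x \<in> carrier G \<Longrightarrow> y \<in> carrier G \<Longrightarrow> b (x \<otimes> y) = b x \<otimes> b y"
  by (simp add: pmaut_def)
lemma pm_pm: "pmaut G b \<Longrightarrow> x \<in> carrier G \<Longrightarrow> b x = x \<or> b x = inv x"
  by (simp add: pmaut_def)
lemma pm_one: "pmaut G b \<Longrightarrow> b \<one> = \<one>"
  using pm_pm[of b \<one>] by auto
lemma pm_inv: assumes "pmaut G b" "x \<in> carrier G" shows "b (inv x) = inv (b x)"
proof -
  have "b x \<otimes> b (inv x) = \<one>" using pm_mult[OF assms(1) assms(2), of "inv x"] assms pm_one[OF assms(1)] by simp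
  then show ?thesis using assms by (metis inv_equality inv_closed pm_closed inv_comm)
qed
lemma pm_N: assumes "pmaut G b" "x \<in> carrier G" "b x \<noteq> x" shows "b x = inv x" "inv x \<noteq> x"
  using pm_pm[OF assms(1,2)] assms(3) by auto
lemma pm_invol: assumes "pmaut G b" "x \<in> carrier G" shows "b (b x) = x"
  using pm_pm[OF assms] pm_inv[OF assms] assms(2) by auto

lemma L1: assumes b: "pmaut G b" and s: "s \<in> carrier G" "b s = s" and n: "n \<in> carrier G" "b n \<noteq> n"
  shows "n \<otimes> s \<otimes> inv n = inv s"
proof -
  have bn: "b n = inv n" "inv n \<noteq> n" using pm_N[OF b n] by auto
  have e: "b (n \<otimes> s) = inv n \<otimes> s" using pm_mult[OF b n(1) s(1)] bn s by simp
  have "b (n \<otimes> s) \<noteq> n \<otimes> s" using e bn n s by simp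
  then have "b (n \<otimes> s) = inv (n \<otimes> s)" using pm_pm[OF b, of "n \<otimes> s"] n s by auto
  then have "inv n \<otimes> s = inv s \<otimes> inv n" using e n s by (simp add: inv_mult_group)
  then have "n \<otimes> (inv n \<otimes> s) = n \<otimes> (inv s \<otimes> inv n)" by simp
  then have "s = n \<otimes> inv s \<otimes> inv n" using n s by (simp add: gs)
  then have "inv s = inv (n \<otimes> inv s \<otimes> inv n)" by simp
  also have "\<dots> = n \<otimes> s \<otimes> inv n" using n s by (simp add: gs)
  finally show ?thesis by simp
qed


lemma S_comm: assumes b: "pmaut G b" and s: "s \<in> carrier G" "b s = s" and t: "t \<in> carrier G" "b t = t"
  and n: "n \<in> carrier G" "b n \<noteq> n"
  shows "s \<otimes> t = t \<otimes> s"
proof -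
  have st: "b (s \<otimes> t) = s \<otimes> t" using pm_mult[OF b s(1) t(1)] s t by simp
  have 1: "n \<otimes> (s \<otimes> t) \<otimes> inv n = inv (s \<otimes> t)" using L1[OF b _ st n] s t by simp
  have 2: "n \<otimes> (s \<otimes> t) \<otimes> inv n = (n \<otimes> s \<otimes> inv n) \<otimes> (n \<otimes> t \<otimes> inv n)" using s t n by (simp add: gs)
  have "inv t \<otimes> inv s = inv s \<otimes> inv t" using 1 2 L1[OF b s n] L1[OF b t n] s t by (simp add: inv_mult_group)
  then have "inv (inv t \<otimes> inv s) = inv (inv s \<otimes> inv t)" by simp
  then show ?thesis using s t by (simp add: inv_mult_group)
qed

lemma comm_inv: assumes "x \<in> carrier G" "y \<in> carrier G" "inv x \<otimes> inv y = inv y \<otimes> inv x"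
  shows "x \<otimes> y = y \<otimes> x"
proof -
  have "inv (inv x \<otimes> inv y) = inv (inv y \<otimes> inv x)" using assms(3) by (rule arg_cong)
  then show ?thesis using assms(1,2) by (simp add: inv_mult_group)
qed

lemma invol_inv: "x \<in> carrier G \<Longrightarrow> x \<otimes> x = \<one> \<Longrightarrow> inv x = x"
  using inv_equality by blast

lemma L_ab: assumes b: "pmaut G b" and ex2: "\<forall>s\<in>carrier G. b s = s \<longrightarrow> s \<otimes> s = \<one>"
  and x: "x \<in> carrier G" and y: "y \<in> carrier G"
  shows "x \<otimes> y = y \<otimes> x"
proof -
  have fi: "inv s = s" if "s \<in> carrier G" "b s = s" for s
    using ex2 that invol_inv by blast
  show ?thesis
  proof (cases "b x = x")
    case bx: True
    show ?thesis
    proof (cases "b y = y")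
      case hy: True
      have "b (x \<otimes> y) = x \<otimes> y" using pm_mult[OF b x y] bx hy by simp
      then have "inv (x \<otimes> y) = x \<otimes> y" using fi x y by blast
      then have "inv y \<otimes> inv x = x \<otimes> y" using x y by (simp add: inv_mult_group)
      then show ?thesis using fi x y bx hy by simp
    next
      case hy: False
      have "y \<otimes> x \<otimes> inv y = inv x" using L1[OF b x bx y hy] .
      then have "y \<otimes> x \<otimes> inv y = x" using fi x bx by simp
      then have "y \<otimes> x \<otimes> inv y \<otimes> y = x \<otimes> y" by simp
      then show ?thesis using x y by (simp add: gs)
    qed
  next
    case bx: False
    show ?thesis
    proof (cases "b y = y")
      case hy: True
      have "x \<otimes> y \<otimes> inv x = inv y" using L1[OF b y hy x bx] .
      then have "x \<otimes> y \<otimes> inv x = y" using fi y hy by simp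
      then have "x \<otimes> y \<otimes> inv x \<otimes> x = y \<otimes> x" by simp
      then show ?thesis using x y by (simp add: gs)
    next
      case hy: False
      have e: "b (x \<otimes> y) = inv x \<otimes> inv y" using pm_mult[OF b x y] pm_N[OF b x bx] pm_N[OF b y hy] by simp
      have "b (x \<otimes> y) = inv (x \<otimes> y)"
      proof (cases "b (x \<otimes> y) = x \<otimes> y")
        case True
        then show ?thesis using fi[of "x \<otimes> y"] x y by simp
      next
        case False
        then show ?thesis using pm_N[OF b _ False] x y by simp
      qed
      then have "inv x \<otimes> inv y = inv y \<otimes> inv x" using e x y by (simp add: inv_mult_group)
      then show ?thesis by (rule comm_inv[OF x y])
    qed
  qed
qed

definition nonab :: bool where "nonab \<longleftrightarrow> (\<exists>x\<in>carrier G. \<exists>y\<in>carrier G. x \<otimes> y \<noteq> y \<otimes> x)"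

lemma F2: assumes na: nonab and b: "pmaut G b" and y: "y \<in> carrier G" "b y \<noteq> y" and n: "n \<in> carrier G" "b n \<noteq> n"
  shows "b (inv y \<otimes> n) = inv y \<otimes> n"
proof (rule ccontr)
  assume w: "b (inv y \<otimes> n) \<noteq> inv y \<otimes> n"
  have iy: "inv y \<in> carrier G" "b (inv y) \<noteq> inv y" using y pm_inv[OF b y(1)] pm_N[OF b y] by auto
  have "\<forall>s\<in>carrier G. b s = s \<longrightarrow> s \<otimes> s = \<one>"
  proof (intro ballI impI)
    fix s assume s: "s \<in> carrier G" "b s = s"
    have "(inv y \<otimes> n) \<otimes> s \<otimes> inv (inv y \<otimes> n) = inv s" using L1[OF b s _ w] y n by simp
    moreover have "(inv y \<otimes> n) \<otimes> s \<otimes> inv (inv y \<otimes> n) = inv y \<otimes> (n \<otimes> s \<otimes> inv n) \<otimes> inv (inv y)"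
      using y n s by (simp add: gs)
    moreover have "inv s \<in> carrier G" "b (inv s) = inv s" using s pm_inv[OF b s(1)] by auto
    ultimately have "inv s = inv (inv s)" using L1[OF b s n] L1[OF b \<open>inv s \<in> carrier G\<close> \<open>b (inv s) = inv s\<close> iy] by simp
    then have "inv s = s" using s by simp
    then show "s \<otimes> s = \<one>" using s by (metis r_inv)
  qed
  then have "\<forall>x\<in>carrier G. \<forall>y\<in>carrier G. x \<otimes> y = y \<otimes> x" using L_ab[OF b] by blast
  then show False using na nonab_def by blast
qed

lemma F2': assumes na: nonab and b: "pmaut G b" and m: "m \<in> carrier G" "b m \<noteq> m" and n: "n \<in> carrier G" "b n \<noteq> n"
  shows "b (m \<otimes> n) = m \<otimes> n"
proof -
  have "inv m \<in> carrier G" "b (inv m) \<noteq> inv m" using m pm_inv[OF b m(1)] pm_N[OF b m] by auto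
  from F2[OF na b this n] show ?thesis using m by simp
qed

lemma NS: assumes b: "pmaut G b" and n: "n \<in> carrier G" "b n \<noteq> n" and s: "s \<in> carrier G" "b s = s"
  shows "b (n \<otimes> s) \<noteq> n \<otimes> s" "b (s \<otimes> n) \<noteq> s \<otimes> n"
  using pm_mult[OF b n(1) s(1)] pm_mult[OF b s(1) n(1)] n s pm_closed[OF b n(1)] by auto

lemma sqN: assumes na: nonab and b: "pmaut G b" and x: "x \<in> carrier G" "b x \<noteq> x" and n: "n \<in> carrier G" "b n \<noteq> n"
  shows "n \<otimes> n = x \<otimes> x"
proof -
  define t where "t = inv x \<otimes> n"
  have t: "t \<in> carrier G" "b t = t" using F2[OF na b x n] x n t_def by auto
  have nt: "n = x \<otimes> t" using t_def x n by simp
  have ix: "inv x \<in> carrier G" "b (inv x) \<noteq> inv x" using x pm_inv[OF b x(1)] pm_N[OF b x] by auto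
  have "inv x \<otimes> t \<otimes> inv (inv x) = inv t" using L1[OF b t ix] .
  then have "x \<otimes> (inv x \<otimes> t \<otimes> x) = x \<otimes> inv t" using x t by simp
  then have tx: "t \<otimes> x = x \<otimes> inv t" using x t by (simp add: gs)
  have "n \<otimes> n = x \<otimes> (t \<otimes> x) \<otimes> t" using nt x t by (simp add: gs)
  also have "\<dots> = x \<otimes> x" using tx x t by (simp add: gs)
  finally show ?thesis .
qed


lemma sq_ab: assumes b1: "pmaut G b1" and b2: "pmaut G b2"
  and a: "a \<in> carrier G" "b1 a = a" "b2 a \<noteq> a" and b: "b \<in> carrier G" "b1 b \<noteq> b" "b2 b = b"
  shows "a \<otimes> a = b \<otimes> b"
proof -
  have h1: "b \<otimes> a \<otimes> inv b = inv a" using L1[OF b1 a(1,2) b(1,2)] .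
  have h2: "a \<otimes> b \<otimes> inv a = inv b" using L1[OF b2 b(1,3) a(1,3)] .
  have "b \<otimes> a \<otimes> inv b \<otimes> b = inv a \<otimes> b" using h1 by simp
  then have e1: "b \<otimes> a = inv a \<otimes> b" using a b by (simp add: gs)
  have "a \<otimes> b \<otimes> inv a \<otimes> a = inv b \<otimes> a" using h2 by simp
  then have e2: "a \<otimes> b = inv b \<otimes> a" using a b by (simp add: gs)
  have "a \<otimes> (b \<otimes> a) = b" using e1 a b by (simp add: gs)
  moreover have "a \<otimes> (b \<otimes> a) = inv b \<otimes> (a \<otimes> a)" using e2 a b by (simp add: gs[symmetric])
  ultimately have "b = inv b \<otimes> (a \<otimes> a)" by simp
  then have "b \<otimes> b = b \<otimes> (inv b \<otimes> (a \<otimes> a))" by simp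
  then show ?thesis using a b by simp
qed

lemma exS: assumes na: nonab and b1: "pmaut G b1" and b2: "pmaut G b2"
  and v0: "v0 \<in> carrier G" "b2 v0 \<noteq> v0" and v1: "v1 \<in> carrier G" "b1 v1 \<noteq> b2 v1"
  shows "\<exists>a\<in>carrier G. b1 a = a \<and> b2 a \<noteq> a"
proof (rule ccontr)
  assume "\<not> ?thesis"
  then have H: "\<And>a. a \<in> carrier G \<Longrightarrow> b1 a = a \<Longrightarrow> b2 a = a" by blast
  have n1: "b1 v1 \<noteq> v1" using H v1 by metis
  have g1: "b2 v1 = v1" using pm_N[OF b1 v1(1) n1] pm_pm[OF b2 v1(1)] v1 by auto
  have "b2 x = x" if x: "x \<in> carrier G" for x
  proof (cases "b1 x = x")
    case True then show ?thesis using H x by blast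
  next
    case False
    define t where "t = inv v1 \<otimes> x"
    have t: "t \<in> carrier G" "b1 t = t" using F2[OF na b1 v1(1) n1 x False] t_def v1 x by auto
    have "b2 t = t" using H t by blast
    moreover have "x = v1 \<otimes> t" using t_def x v1 by simp
    ultimately show ?thesis using pm_mult[OF b2 v1(1) t(1)] g1 by simp
  qed
  then show False using v0 by blast
qed

lemma Ded: assumes na: nonab and b1: "pmaut G b1" and b2: "pmaut G b2"
  and v0: "v0 \<in> carrier G" "b1 v0 \<noteq> v0" and v1: "v1 \<in> carrier G" "b2 v1 \<noteq> v1"
  and v2: "v2 \<in> carrier G" "b1 v2 \<noteq> b2 v2"
  and u: "u \<in> carrier G" and w: "w \<in> carrier G"
  shows "u \<otimes> w \<otimes> inv u = w \<or> u \<otimes> w \<otimes> inv u = inv w"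
proof -
  obtain a where a: "a \<in> carrier G" "b1 a = a" "b2 a \<noteq> a" using exS[OF na b1 b2 v1 v2] by blast
  obtain b where b: "b \<in> carrier G" "b2 b = b" "b1 b \<noteq> b" using exS[OF na b2 b1 v0 v2(1)] v2(2) by metis
  have hN: "n \<otimes> n = b \<otimes> b" if "n \<in> carrier G" "b1 n \<noteq> n" for n
    using sqN[OF na b1 b(1) b(3) that] .
  have hS: "s \<otimes> s = \<one> \<or> s \<otimes> s = b \<otimes> b" if s: "s \<in> carrier G" "b1 s = s" for s
  proof (cases "b2 s = s")
    case True
    have h1: "b \<otimes> s \<otimes> inv b = inv s" using L1[OF b1 s b(1,3)] .
    have h2: "s \<otimes> b = b \<otimes> s" using S_comm[OF b2 s(1) True b(1,2) a(1,3)] .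
    have "b \<otimes> s \<otimes> inv b = s \<otimes> b \<otimes> inv b" using h2 by simp
    also have "\<dots> = s" using s b by (simp add: gs)
    finally have "s = inv s" using h1 by simp
    then have "s \<otimes> s = \<one>" using s by (metis r_inv)
    then show ?thesis by simp
  next
    case False
    have "s \<otimes> s = a \<otimes> a" using sqN[OF na b2 a(1,3) s(1) False] .
    also have "\<dots> = b \<otimes> b" using sq_ab[OF b1 b2 a(1,2,3) b(1,3,2)] .
    finally show ?thesis by simp
  qed
  show ?thesis
  proof (cases "b1 u = u")
    case uS: True
    show ?thesis
    proof (cases "b1 w = w")
      case wS: True
      have "u \<otimes> w = w \<otimes> u" using S_comm[OF b1 u uS w wS b(1,3)] .
      then show ?thesis using u w by (simp add: gs)
    next
      case wN: False
      have iw: "inv w \<in> carrier G" "b1 (inv w) \<noteq> inv w" using w pm_inv[OF b1 w] pm_N[OF b1 w wN] by auto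
      have "inv w \<otimes> u \<otimes> inv (inv w) = inv u" using L1[OF b1 u uS iw] .
      then have "w \<otimes> (inv w \<otimes> u \<otimes> w) = w \<otimes> inv u" using u w by simp
      then have uw: "u \<otimes> w = w \<otimes> inv u" using u w by (simp add: gs)
      have e: "u \<otimes> w \<otimes> inv u = w \<otimes> (inv u \<otimes> inv u)" using uw u w by (simp add: gs)
      from hS[OF u uS] show ?thesis
      proof
        assume uu1: "u \<otimes> u = \<one>"
        then have "inv u = u" using u invol_inv by blast
        then show ?thesis using e u w uu1 by simp
      next
        assume uu: "u \<otimes> u = b \<otimes> b"
        have "inv u \<otimes> inv u = inv (u \<otimes> u)" using u by (simp add: inv_mult_group)
        also have "\<dots> = inv (w \<otimes> w)" using uu hN[OF w wN] by simp
        also have "\<dots> = inv w \<otimes> inv w" using w by (simp add: inv_mult_group)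
        finally show ?thesis using e u w by simp
      qed
    qed
  next
    case uN: False
    show ?thesis
    proof (cases "b1 w = w")
      case wS: True
      show ?thesis using L1[OF b1 w wS u uN] by simp
    next
      case wN: False
      define s where "s = inv u \<otimes> w"
      have s: "s \<in> carrier G" "b1 s = s" using F2[OF na b1 u uN w wN] s_def u w by auto
      have ws: "w = u \<otimes> s" using s_def u w by simp
      have L: "u \<otimes> s \<otimes> inv u = inv s" using L1[OF b1 s u uN] .
      have e: "u \<otimes> w \<otimes> inv u = u \<otimes> inv s"
      proof -
        have "u \<otimes> w \<otimes> inv u = u \<otimes> (u \<otimes> s \<otimes> inv u)" using ws u s by (simp add: gs)
        then show ?thesis using L by simp
      qed
      from hS[OF s] show ?thesis
      proof
        assume "s \<otimes> s = \<one>"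
        then have "inv s = s" using s invol_inv by blast
        then show ?thesis using e ws by simp
      next
        assume ss: "s \<otimes> s = b \<otimes> b"
        have "inv s = s \<otimes> inv (s \<otimes> s)" using s by (simp add: gs)
        also have "\<dots> = s \<otimes> inv (u \<otimes> u)" using ss hN[OF u uN] by simp
        finally have is1: "inv s = s \<otimes> (inv u \<otimes> inv u)" using s u by (simp add: inv_mult_group)
        have "u \<otimes> inv s = (u \<otimes> s \<otimes> inv u) \<otimes> inv u" using is1 u s by (simp add: gs)
        also have "\<dots> = inv s \<otimes> inv u" using L by simp
        also have "\<dots> = inv w" using ws u s by (simp add: inv_mult_group)
        finally show ?thesis using e by simp
      qed
    qed
  qed
qed


lemma adj_iff: "cay_adj G (carrier G - {\<one>}) x y \<longleftrightarrow> x \<in> carrier G \<and> y \<in> carrier G \<and> x \<noteq> y"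
proof -
  have "x \<in> carrier G \<Longrightarrow> y \<in> carrier G \<Longrightarrow> inv x \<otimes> y = \<one> \<longleftrightarrow> y = x"
    by (simp add: inv_solve_left')
  then show ?thesis unfolding cay_adj_def by auto
qed

lemma colour_transl: "a \<in> carrier G \<Longrightarrow> b \<in> carrier G \<Longrightarrow> c \<in> carrier G \<Longrightarrow>
  cay_colour G (a \<otimes> b) (a \<otimes> c) = cay_colour G b c"
  unfolding cay_colour_def by (simp add: gs)

lemma colour_one: "v \<in> carrier G \<Longrightarrow> cay_colour G \<one> v = {v, inv v}"
  unfolding cay_colour_def by simp

lemma bij_lmult: "c \<in> carrier G \<Longrightarrow> bij_betw (\<lambda>x. c \<otimes> x) (carrier G) (carrier G)"
  by (rule bij_betw_byWitness[where f'="\<lambda>x. inv c \<otimes> x"]) auto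

lemma bij_inv: "bij_betw (\<lambda>x. inv x) (carrier G) (carrier G)"
  by (rule bij_betw_byWitness[where f'="\<lambda>x. inv x"]) auto

lemma AFF1: assumes "affine G f" "f \<one> = \<one>"
  shows "\<exists>\<sigma>\<in>iso G G. \<forall>x\<in>carrier G. f x = \<sigma> x"
proof -
  obtain \<sigma> g where s: "\<sigma> \<in> iso G G" "g \<in> carrier G" "\<forall>x\<in>carrier G. f x = \<sigma> (g \<otimes> x)"
    using assms(1) unfolding affine_def by blast
  have hom: "\<sigma> \<in> hom G G" and bij: "bij_betw \<sigma> (carrier G) (carrier G)" using s(1) unfolding iso_def by auto
  have "\<sigma> (\<one> \<otimes> \<one>) = \<sigma> \<one> \<otimes> \<sigma> \<one>" using hom unfolding hom_def by blast
  then have "\<sigma> \<one> \<otimes> \<sigma> \<one> = \<sigma> \<one> \<otimes> \<one>" using hom_in_carrier[OF hom one_closed] by simp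
  then have s1: "\<sigma> \<one> = \<one>" using hom_in_carrier[OF hom one_closed] by (simp del: r_one)
  have "f \<one> = \<sigma> g" using s(2,3) by simp
  then have "\<sigma> g = \<sigma> \<one>" using s1 assms(2) by simp
  then have "g = \<one>" using bij_betw_imp_inj_on[OF bij] s(2) unfolding inj_on_def by blast
  then show ?thesis using s by auto
qed

lemma inv_cp: assumes D: "\<And>u w. u \<in> carrier G \<Longrightarrow> w \<in> carrier G \<Longrightarrow> u \<otimes> w \<otimes> inv u = w \<or> u \<otimes> w \<otimes> inv u = inv w"
  shows "colour_preserving G (carrier G - {\<one>}) (\<lambda>x. inv x)"
  unfolding colour_preserving_def cay_aut_def
proof (intro conjI ballI allI impI)
  show "bij_betw (\<lambda>x. inv x) (carrier G) (carrier G)" by (rule bij_inv)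
next
  fix x y assume "x \<in> carrier G" "y \<in> carrier G"
  then show "cay_adj G (carrier G - {\<one>}) x y = cay_adj G (carrier G - {\<one>}) (inv x) (inv y)"
    unfolding adj_iff by (auto dest: inv_inj[unfolded inj_on_def, rule_format])
next
  fix x y assume "cay_adj G (carrier G - {\<one>}) x y"
  then have x: "x \<in> carrier G" and y: "y \<in> carrier G" unfolding adj_iff by auto
  define w where "w = inv y \<otimes> x"
  have w: "w \<in> carrier G" using w_def x y by simp
  have e: "x \<otimes> inv y = x \<otimes> w \<otimes> inv x" using w_def x y by (simp add: gs)
  have iw: "inv w = inv x \<otimes> y" using w_def x y by (simp add: inv_mult_group)
  have c1: "cay_colour G (inv x) (inv y) = {x \<otimes> inv y, inv (x \<otimes> inv y)}" unfolding cay_colour_def using x by simp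
  have c2: "cay_colour G x y = {inv x \<otimes> y, inv (inv x \<otimes> y)}" unfolding cay_colour_def by simp
  from D[OF x w] show "cay_colour G (inv x) (inv y) = cay_colour G x y"
  proof
    assume h: "x \<otimes> w \<otimes> inv x = w"
    have "inv (inv x \<otimes> y) = w" using iw w by (metis inv_inv)
    then show ?thesis using c1 c2 e h iw w by auto
  next
    assume h: "x \<otimes> w \<otimes> inv x = inv w"
    then show ?thesis using c1 c2 e iw by simp
  qed
qed

lemma noDed: assumes CCA: "CCA G (carrier G - {\<one>})" and na: nonab
  and D: "\<And>u w. u \<in> carrier G \<Longrightarrow> w \<in> carrier G \<Longrightarrow> u \<otimes> w \<otimes> inv u = w \<or> u \<otimes> w \<otimes> inv u = inv w"
  shows False
proof -
  have "affine G (\<lambda>x. inv x)" using CCA inv_cp[OF D] unfolding CCA_def by blast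
  then obtain \<sigma> where s: "\<sigma> \<in> iso G G" "\<forall>x\<in>carrier G. inv x = \<sigma> x" using AFF1 by fastforce
  have hom: "\<sigma> \<in> hom G G" using s(1) unfolding iso_def by auto
  have "x \<otimes> y = y \<otimes> x" if x: "x \<in> carrier G" and y: "y \<in> carrier G" for x y
  proof -
    have "inv (x \<otimes> y) = inv x \<otimes> inv y" using s(2) hom x y unfolding hom_def by simp
    then have "inv y \<otimes> inv x = inv x \<otimes> inv y" using x y by (simp add: inv_mult_group)
    then show ?thesis using comm_inv[OF x y] by metis
  qed
  then show False using na unfolding nonab_def by blast
qed

lemma pm_unique: assumes CCA: "CCA G (carrier G - {\<one>})" and na: nonab
  and b1: "pmaut G b1" and b2: "pmaut G b2"
  and v0: "v0 \<in> carrier G" "b1 v0 \<noteq> v0" and v1: "v1 \<in> carrier G" "b2 v1 \<noteq> v1"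
  and x: "x \<in> carrier G"
  shows "b1 x = b2 x"
proof (rule ccontr)
  assume "b1 x \<noteq> b2 x"
  from noDed[OF CCA na Ded[OF na b1 b2 v0 v1 x this]] show False .
qed

lemma ab_pm: assumes na: "\<not> nonab" and b: "pmaut G b" and v: "v \<in> carrier G" "b v \<noteq> v"
  and w: "w \<in> carrier G" shows "b w = inv w"
proof (cases "b w = w")
  case True
  have bv: "b v = inv v" "inv v \<noteq> v" using pm_N[OF b v] by auto
  have "b (v \<otimes> w) = inv v \<otimes> w" using pm_mult[OF b v(1) w] bv True by simp
  moreover have "b (v \<otimes> w) \<noteq> v \<otimes> w" using NS[OF b v w True] by simp
  ultimately have "inv v \<otimes> w = inv (v \<otimes> w)" using pm_N[OF b _ ] v w by (metis m_closed)
  also have "\<dots> = inv w \<otimes> inv v" using v w by (simp add: inv_mult_group)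
  also have "\<dots> = inv v \<otimes> inv w" using na v w unfolding nonab_def by (metis inv_closed)
  finally have "w = inv w" using v w by simp
  then show ?thesis using True by simp
next
  case False then show ?thesis using pm_N[OF b w] by simp
qed


lemma comm_sq: assumes x: "x \<in> carrier G" and y: "y \<in> carrier G" and c: "x \<otimes> y = y \<otimes> x"
  shows "(x \<otimes> y) \<otimes> (x \<otimes> y) = (x \<otimes> x) \<otimes> (y \<otimes> y)"
proof -
  have "(x \<otimes> y) \<otimes> (x \<otimes> y) = x \<otimes> ((y \<otimes> x) \<otimes> y)" using x y by (simp add: m_assoc)
  also have "\<dots> = x \<otimes> ((x \<otimes> y) \<otimes> y)" using c by simp
  also have "\<dots> = (x \<otimes> x) \<otimes> (y \<otimes> y)" using x y by (simp add: m_assoc)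
  finally show ?thesis .
qed

lemma KEY:
  assumes CCA: "CCA G (carrier G - {\<one>})" and cp: "colour_permuting G (carrier G - {\<one>}) \<psi>"
    and one: "\<psi> \<one> = \<one>"
  shows "\<psi> \<in> iso G G"
proof -
  have bij: "bij_betw \<psi> (carrier G) (carrier G)" using cp unfolding colour_permuting_def cay_aut_def by blast
  have col: "\<And>x y u v. x \<in> carrier G \<Longrightarrow> y \<in> carrier G \<Longrightarrow> x \<noteq> y \<Longrightarrow> u \<in> carrier G \<Longrightarrow> v \<in> carrier G \<Longrightarrow> u \<noteq> v
     \<Longrightarrow> cay_colour G x y = cay_colour G u v \<Longrightarrow> cay_colour G (\<psi> x) (\<psi> y) = cay_colour G (\<psi> u) (\<psi> v)"
    using cp unfolding colour_permuting_def adj_iff by blast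
  have pc: "\<And>x. x \<in> carrier G \<Longrightarrow> \<psi> x \<in> carrier G" using bij_betw_apply[OF bij] .
  have pinj: "\<And>x y. x \<in> carrier G \<Longrightarrow> y \<in> carrier G \<Longrightarrow> \<psi> x = \<psi> y \<Longrightarrow> x = y"
    using bij_betw_imp_inj_on[OF bij] unfolding inj_on_def by blast
  define \<psi>i where "\<psi>i = inv_into (carrier G) \<psi>"
  have bi: "bij_betw \<psi>i (carrier G) (carrier G)" unfolding \<psi>i_def by (rule bij_betw_inv_into[OF bij])
  have ic: "\<And>v. v \<in> carrier G \<Longrightarrow> \<psi>i v \<in> carrier G" using bij_betw_apply[OF bi] .
  have pi: "\<And>v. v \<in> carrier G \<Longrightarrow> \<psi> (\<psi>i v) = v" unfolding \<psi>i_def using bij_betw_inv_into_right[OF bij] .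
  have ip: "\<And>x. x \<in> carrier G \<Longrightarrow> \<psi>i (\<psi> x) = x" unfolding \<psi>i_def using bij_betw_inv_into_left[OF bij] .
  define \<alpha> where "\<alpha> g v = inv (\<psi> g) \<otimes> \<psi> (g \<otimes> \<psi>i v)" for g v
  have \<alpha>c: "\<And>g v. g \<in> carrier G \<Longrightarrow> v \<in> carrier G \<Longrightarrow> \<alpha> g v \<in> carrier G" unfolding \<alpha>_def using pc ic by simp
  have i1: "\<psi>i \<one> = \<one>" using ip[of \<one>] one by simp
  have \<alpha>1: "\<And>g. g \<in> carrier G \<Longrightarrow> \<alpha> g \<one> = \<one>" unfolding \<alpha>_def using i1 pc by simp
  have \<alpha>bij: "bij_betw (\<alpha> g) (carrier G) (carrier G)" if g: "g \<in> carrier G" for g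
  proof -
    have b1: "bij_betw ((\<lambda>u. g \<otimes> u) \<circ> \<psi>i) (carrier G) (carrier G)" by (rule bij_betw_trans[OF bi bij_lmult[OF g]])
    have b2: "bij_betw (\<psi> \<circ> ((\<lambda>u. g \<otimes> u) \<circ> \<psi>i)) (carrier G) (carrier G)" by (rule bij_betw_trans[OF b1 bij])
    have b3: "bij_betw ((\<lambda>y. inv (\<psi> g) \<otimes> y) \<circ> (\<psi> \<circ> ((\<lambda>u. g \<otimes> u) \<circ> \<psi>i))) (carrier G) (carrier G)"
      by (rule bij_betw_trans[OF b2 bij_lmult]) (simp add: pc g)
    have "\<alpha> g = (\<lambda>x. inv (\<psi> g) \<otimes> \<psi> (g \<otimes> \<psi>i x))" by (rule ext) (simp add: \<alpha>_def)
    then show ?thesis using b3 by (simp add: comp_def)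
  qed
  have \<alpha>cp: "colour_preserving G (carrier G - {\<one>}) (\<alpha> g)" if g: "g \<in> carrier G" for g
    unfolding colour_preserving_def cay_aut_def
  proof (intro conjI ballI allI impI)
    show "bij_betw (\<alpha> g) (carrier G) (carrier G)" using \<alpha>bij[OF g] .
  next
    fix x y assume x: "x \<in> carrier G" and y: "y \<in> carrier G"
    have "\<alpha> g x = \<alpha> g y \<longleftrightarrow> x = y" using bij_betw_imp_inj_on[OF \<alpha>bij[OF g]] x y unfolding inj_on_def by blast
    then show "cay_adj G (carrier G - {\<one>}) x y = cay_adj G (carrier G - {\<one>}) (\<alpha> g x) (\<alpha> g y)"
      unfolding adj_iff using x y \<alpha>c g by blast
  next
    fix x y assume "cay_adj G (carrier G - {\<one>}) x y"
    then have x: "x \<in> carrier G" and y: "y \<in> carrier G" and xy: "x \<noteq> y" unfolding adj_iff by auto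
    define u where "u = \<psi>i x"
    define v where "v = \<psi>i y"
    have u: "u \<in> carrier G" and v: "v \<in> carrier G" using ic x y u_def v_def by auto
    have uv: "u \<noteq> v" using pi x y xy u_def v_def by metis
    have "cay_colour G (\<alpha> g x) (\<alpha> g y) = cay_colour G (inv (\<psi> g) \<otimes> \<psi> (g \<otimes> u)) (inv (\<psi> g) \<otimes> \<psi> (g \<otimes> v))"
      unfolding \<alpha>_def u_def v_def ..
    also have "\<dots> = cay_colour G (\<psi> (g \<otimes> u)) (\<psi> (g \<otimes> v))" using colour_transl pc g u v by simp
    also have "\<dots> = cay_colour G (\<psi> u) (\<psi> v)"
    proof (rule col)
      show "g \<otimes> u \<noteq> g \<otimes> v" using g u v uv by simp
      show "cay_colour G (g \<otimes> u) (g \<otimes> v) = cay_colour G u v" using colour_transl g u v by simp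
    qed (use g u v uv in auto)
    also have "\<dots> = cay_colour G x y" using pi x y u_def v_def by simp
    finally show "cay_colour G (\<alpha> g x) (\<alpha> g y) = cay_colour G x y" .
  qed
  have \<alpha>aff: "\<exists>\<sigma>\<in>iso G G. \<forall>x\<in>carrier G. \<alpha> g x = \<sigma> x" if g: "g \<in> carrier G" for g
    using AFF1 CCA \<alpha>cp[OF g] \<alpha>1[OF g] unfolding CCA_def by blast
  have \<alpha>pm: "pmaut G (\<alpha> g)" if g: "g \<in> carrier G" for g
  proof -
    obtain \<sigma> where \<sigma>: "\<sigma> \<in> iso G G" "\<forall>x\<in>carrier G. \<alpha> g x = \<sigma> x" using \<alpha>aff[OF g] by blast
    have hom: "\<sigma> \<in> hom G G" using \<sigma>(1) unfolding iso_def by auto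
    have m: "\<forall>x\<in>carrier G. \<forall>y\<in>carrier G. \<alpha> g (x \<otimes> y) = \<alpha> g x \<otimes> \<alpha> g y" using \<sigma>(2) hom unfolding hom_def by simp
    have p: "\<forall>v\<in>carrier G. \<alpha> g v = v \<or> \<alpha> g v = inv v"
    proof
      fix v assume v: "v \<in> carrier G"
      show "\<alpha> g v = v \<or> \<alpha> g v = inv v"
      proof (cases "v = \<one>")
        case True then show ?thesis using \<alpha>1 g by simp
      next
        case False
        have "cay_adj G (carrier G - {\<one>}) \<one> v" using adj_iff v False by auto
        then have "cay_colour G (\<alpha> g \<one>) (\<alpha> g v) = cay_colour G \<one> v" using \<alpha>cp[OF g] unfolding colour_preserving_def by blast
        then have "{\<alpha> g v, inv (\<alpha> g v)} = {v, inv v}" using \<alpha>1[OF g] colour_one \<alpha>c[OF g v] v by simp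
        then show ?thesis by blast
      qed
    qed
    show ?thesis unfolding pmaut_def using \<alpha>c g m p by blast
  qed
  have R: "\<And>g x. g \<in> carrier G \<Longrightarrow> x \<in> carrier G \<Longrightarrow> \<psi> (g \<otimes> x) = \<psi> g \<otimes> \<alpha> g (\<psi> x)"
    unfolding \<alpha>_def using ip pc by simp
  have \<alpha>hom: "\<alpha> (g \<otimes> h) v = \<alpha> g (\<alpha> h v)" if g: "g \<in> carrier G" and h: "h \<in> carrier G" and v: "v \<in> carrier G" for g h v
  proof -
    define x where "x = \<psi>i v"
    have x: "x \<in> carrier G" "\<psi> x = v" using x_def ic pi v by auto
    have "\<psi> (g \<otimes> h) \<otimes> \<alpha> (g \<otimes> h) v = \<psi> (g \<otimes> h \<otimes> x)" using R[of "g \<otimes> h" x] x g h by simp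
    also have "\<dots> = \<psi> (g \<otimes> (h \<otimes> x))" using g h x by (simp add: m_assoc)
    also have "\<dots> = \<psi> g \<otimes> \<alpha> g (\<psi> h \<otimes> \<alpha> h v)" using R[of g "h \<otimes> x"] R[of h x] g h x by simp
    also have "\<dots> = \<psi> g \<otimes> \<alpha> g (\<psi> h) \<otimes> \<alpha> g (\<alpha> h v)"
      using pm_mult[OF \<alpha>pm[OF g], of "\<psi> h" "\<alpha> h v"] pc \<alpha>c g h v by (simp add: m_assoc)
    also have "\<dots> = \<psi> (g \<otimes> h) \<otimes> \<alpha> g (\<alpha> h v)" using R[of g h] g h by simp
    finally show ?thesis using pc g h \<alpha>c v by simp
  qed
  have \<alpha>one: "\<alpha> \<one> v = v" if v: "v \<in> carrier G" for v
  proof -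
    have "\<psi> (\<one> \<otimes> \<psi>i v) = \<psi> \<one> \<otimes> \<alpha> \<one> (\<psi> (\<psi>i v))" by (rule R[OF one_closed ic[OF v]])
    then show ?thesis using one pi v ic \<alpha>c by simp
  qed
  have twist: "g \<otimes> g = \<one>" if g: "g \<in> carrier G" and t: "\<alpha> g (\<psi> g) = inv (\<psi> g)" for g
  proof -
    have "\<psi> (g \<otimes> g) = \<psi> \<one>" using R[OF g g] t one pc g by simp
    then show ?thesis using pinj g by simp
  qed
  have main: "\<forall>g\<in>carrier G. \<forall>v\<in>carrier G. \<alpha> g v = v"
  proof (rule ccontr)
    assume "\<not> ?thesis"
    then obtain g0 v0 where g0: "g0 \<in> carrier G" and v0: "v0 \<in> carrier G" and gv0: "\<alpha> g0 v0 \<noteq> v0" by blast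
    show False
    proof (cases nonab)
      case False
      have comm: "\<And>x y. x \<in> carrier G \<Longrightarrow> y \<in> carrier G \<Longrightarrow> x \<otimes> y = y \<otimes> x"
        using False unfolding nonab_def by blast
      have sq: "g \<otimes> g = \<one>" if g: "g \<in> carrier G" and v: "v \<in> carrier G" "\<alpha> g v \<noteq> v" for g v
        using twist[OF g ab_pm[OF False \<alpha>pm[OF g] v pc[OF g]]] .
      have g0sq: "g0 \<otimes> g0 = \<one>" using sq[OF g0 v0 gv0] .
      have allsq: "h \<otimes> h = \<one>" if h: "h \<in> carrier G" for h
      proof (cases "\<exists>v\<in>carrier G. \<alpha> h v \<noteq> v")
        case True then show ?thesis using sq h by blast
      next
        case False
        have "\<alpha> (g0 \<otimes> h) v0 = \<alpha> g0 v0" using \<alpha>hom[OF g0 h v0] False v0 by simp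
        then have "(g0 \<otimes> h) \<otimes> (g0 \<otimes> h) = \<one>" using sq[of "g0 \<otimes> h" v0] g0 h v0 gv0 by simp
        moreover have "(g0 \<otimes> h) \<otimes> (g0 \<otimes> h) = (g0 \<otimes> g0) \<otimes> (h \<otimes> h)"
        proof -
          have "(g0 \<otimes> h) \<otimes> (g0 \<otimes> h) = g0 \<otimes> ((h \<otimes> g0) \<otimes> h)" using g0 h by (simp add: m_assoc)
          also have "\<dots> = g0 \<otimes> ((g0 \<otimes> h) \<otimes> h)" by (subst comm[OF h g0]) (rule refl)
          also have "\<dots> = (g0 \<otimes> g0) \<otimes> (h \<otimes> h)" using g0 h by (simp add: m_assoc)
          finally show ?thesis .
        qed
        ultimately show ?thesis using g0sq h by simp
      qed
      have "inv v0 = v0" using allsq v0 invol_inv by blast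
      then show False using pm_pm[OF \<alpha>pm[OF g0] v0] gv0 by simp
    next
      case na: True
      define \<beta> where "\<beta> = \<alpha> g0"
      have bpm: "pmaut G \<beta>" using \<alpha>pm g0 \<beta>_def by simp
      have bv0: "\<beta> v0 \<noteq> v0" using gv0 \<beta>_def by simp
      define K where "K = (\<lambda>g. \<forall>v\<in>carrier G. \<alpha> g v = v)"
      have hK: "\<alpha> g v = \<beta> v" if g: "g \<in> carrier G" and nk: "\<not> K g" and v: "v \<in> carrier G" for g v
      proof -
        obtain v1 where v1: "v1 \<in> carrier G" "\<alpha> g v1 \<noteq> v1" using nk unfolding K_def by blast
        show ?thesis using pm_unique[OF CCA na \<alpha>pm[OF g] bpm v1 v0 bv0 v] .
      qed
      have g0K: "\<not> K g0" using v0 gv0 unfolding K_def by blast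
      have RK: "\<psi> (k \<otimes> x) = \<psi> k \<otimes> \<psi> x" if "k \<in> carrier G" "K k" "x \<in> carrier G" for k x
        using R[of k x] that pc unfolding K_def by simp
      have RN: "\<psi> (g \<otimes> x) = \<psi> g \<otimes> \<beta> (\<psi> x)" if "g \<in> carrier G" "\<not> K g" "x \<in> carrier G" for g x
        using R[of g x] hK[of g "\<psi> x"] that pc by simp
      have KK: "K (k \<otimes> k')" if "k \<in> carrier G" "k' \<in> carrier G" "K k" "K k'" for k k'
        using that \<alpha>hom \<alpha>c unfolding K_def by simp
      have NN: "K (g \<otimes> h)" if g: "g \<in> carrier G" "\<not> K g" and h: "h \<in> carrier G" "\<not> K h" for g h
        unfolding K_def
      proof
        fix v assume v: "v \<in> carrier G"
        have "\<alpha> (g \<otimes> h) v = \<beta> (\<beta> v)" using \<alpha>hom[OF g(1) h(1) v] hK[OF h v] hK[OF g pm_closed[OF bpm v]] by simp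
        then show "\<alpha> (g \<otimes> h) v = v" using pm_invol[OF bpm v] by simp
      qed
      have NK: "\<not> K (g \<otimes> k)" if g: "g \<in> carrier G" "\<not> K g" and k: "k \<in> carrier G" "K k" for g k
      proof -
        have "\<alpha> (g \<otimes> k) v0 = \<beta> v0" using \<alpha>hom[OF g(1) k(1) v0] k(2) v0 hK[OF g v0] unfolding K_def by simp
        then show ?thesis using bv0 v0 unfolding K_def by metis
      qed
      have Kinv: "K (inv k)" "\<psi> (inv k) = inv (\<psi> k)" if k: "k \<in> carrier G" "K k" for k
      proof -
        show "K (inv k)" unfolding K_def
        proof
          fix v assume v: "v \<in> carrier G"
          have "\<alpha> (k \<otimes> inv k) v = \<alpha> k (\<alpha> (inv k) v)" using \<alpha>hom[of k "inv k" v] k v by simp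
          also have "\<dots> = \<alpha> (inv k) v" using k \<alpha>c v unfolding K_def by simp
          finally show "\<alpha> (inv k) v = v" using \<alpha>one v k by simp
        qed
        then have "\<psi> (k \<otimes> inv k) = \<psi> k \<otimes> \<psi> (inv k)" using RK[of k "inv k"] k by simp
        then have "\<psi> k \<otimes> \<psi> (inv k) = \<one>" using one k by simp
        then show "\<psi> (inv k) = inv (\<psi> k)" using pc k by (metis inv_closed inv_comm inv_equality)
      qed
      have ivN: "inv v0 \<in> carrier G" "\<beta> (inv v0) \<noteq> inv v0"
        using v0 bv0 pm_inv[OF bpm v0] pm_closed[OF bpm v0] by (auto dest: inv_inj[unfolded inj_on_def, rule_format])
      have "\<exists>g1\<in>carrier G. \<not> K g1 \<and> \<beta> (\<psi> g1) \<noteq> \<psi> g1"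
      proof (rule ccontr)
        assume H0: "\<not> ?thesis"
        have cov: "K (\<psi>i v)" if v: "v \<in> carrier G" "\<beta> v \<noteq> v" for v
          using H0 ic[OF v(1)] pi[OF v(1)] v(2) by metis
        have "K g0"
        proof (cases "\<beta> (\<psi> g0) = \<psi> g0")
          case False
          then have "K (\<psi>i (\<psi> g0))" using cov pc g0 by blast
          then show ?thesis using ip g0 by simp
        next
          case True
          define m where "m = inv v0 \<otimes> \<psi> g0"
          have m: "m \<in> carrier G" "\<beta> m \<noteq> m" using NS(1)[OF bpm ivN pc[OF g0] True] m_def pc g0 v0 by auto
          have "\<psi> (\<psi>i v0 \<otimes> \<psi>i m) = v0 \<otimes> m" using RK[OF ic[OF v0] cov[OF v0 bv0] ic[OF m(1)]] pi v0 m by simp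
          also have "\<dots> = \<psi> g0" using m_def v0 pc g0 by simp
          finally have "\<psi>i v0 \<otimes> \<psi>i m = g0" using pinj ic v0 m g0 by simp
          then show ?thesis using KK[OF ic[OF v0] ic[OF m(1)] cov[OF v0 bv0] cov[OF m]] by simp
        qed
        then show False using g0K by simp
      qed
      then obtain g1 where g1: "g1 \<in> carrier G" "\<not> K g1" and pN: "\<beta> (\<psi> g1) \<noteq> \<psi> g1" by blast
      define p where "p = \<psi> g1"
      have p: "p \<in> carrier G" "\<beta> p \<noteq> p" using p_def pc g1 pN by auto
      have g1sq: "g1 \<otimes> g1 = \<one>" using twist[OF g1(1)] hK[OF g1 pc[OF g1(1)]] pm_N[OF bpm p] p_def by simp
      have bg1: "\<beta> g1 = g1" using pm_pm[OF bpm g1(1)] invol_inv[OF g1(1) g1sq] by auto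
      have S3: "\<beta> k = k \<and> k \<otimes> k = \<one>" if k: "k \<in> carrier G" "K k" "\<beta> (\<psi> k) = \<psi> k" for k
      proof -
        have gk: "\<not> K (g1 \<otimes> k)" using NK[OF g1 k(1,2)] .
        have gkc: "g1 \<otimes> k \<in> carrier G" using g1 k by simp
        have e: "\<psi> (g1 \<otimes> k) = p \<otimes> \<psi> k" using RN[OF g1 k(1)] k(3) p_def by simp
        have nf: "\<beta> (p \<otimes> \<psi> k) \<noteq> p \<otimes> \<psi> k" using NS(1)[OF bpm p pc[OF k(1)] k(3)] .
        have "\<alpha> (g1 \<otimes> k) (\<psi> (g1 \<otimes> k)) = inv (\<psi> (g1 \<otimes> k))"
          using hK[OF gkc gk pc[OF gkc]] e nf pm_N(1)[OF bpm _ nf] p pc k by simp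
        then have sq: "(g1 \<otimes> k) \<otimes> (g1 \<otimes> k) = \<one>" using twist gkc by blast
        then have "\<beta> (g1 \<otimes> k) = g1 \<otimes> k" using pm_pm[OF bpm gkc] invol_inv[OF gkc sq] by auto
        then have "g1 \<otimes> \<beta> k = g1 \<otimes> k" using pm_mult[OF bpm g1(1) k(1)] bg1 by simp
        then have bk: "\<beta> k = k" using g1 k pm_closed[OF bpm k(1)] by simp
        have "g1 \<otimes> k = k \<otimes> g1" using S_comm[OF bpm g1(1) bg1 k(1) bk v0 bv0] .
        then have "(g1 \<otimes> k) \<otimes> (g1 \<otimes> k) = (g1 \<otimes> g1) \<otimes> (k \<otimes> k)" using comm_sq g1(1) k(1) by blast
        then have "k \<otimes> k = \<one>" using sq g1sq k by simp
        then show ?thesis using bk by simp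
      qed
      have S4: False if H: "\<And>k. k \<in> carrier G \<Longrightarrow> K k \<Longrightarrow> \<beta> k = k"
      proof -
        have "\<beta> x = x" if x: "x \<in> carrier G" for x
        proof (cases "K x")
          case True then show ?thesis using H x by simp
        next
          case False
          have "K (g1 \<otimes> x)" using NN[OF g1 x False] .
          then have "\<beta> (g1 \<otimes> x) = g1 \<otimes> x" using H g1 x by simp
          then have "g1 \<otimes> \<beta> x = g1 \<otimes> x" using pm_mult[OF bpm g1(1) x] bg1 by simp
          then show ?thesis using g1 x pm_closed[OF bpm x] by simp
        qed
        then show False using v0 bv0 by blast
      qed
      have S5: "\<beta> (\<psi> k) = \<psi> k" if k: "k \<in> carrier G" "K k" "\<beta> k = k" for k
      proof (rule ccontr)
        assume nk: "\<beta> (\<psi> k) \<noteq> \<psi> k"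
        have "\<beta> k' = k'" if k': "k' \<in> carrier G" "K k'" for k'
        proof (cases "\<beta> (\<psi> k') = \<psi> k'")
          case True then show ?thesis using S3 k' by blast
        next
          case False
          define k'' where "k'' = inv k \<otimes> k'"
          have kc: "k'' \<in> carrier G" using k k' k''_def by simp
          have kK: "K k''" using KK[of "inv k" k'] Kinv[OF k(1,2)] k k' k''_def by simp
          have "\<psi> k'' = inv (\<psi> k) \<otimes> \<psi> k'" using RK[of "inv k" k'] Kinv[OF k(1,2)] k k' k''_def by simp
          moreover have "\<beta> (inv (\<psi> k) \<otimes> \<psi> k') = inv (\<psi> k) \<otimes> \<psi> k'"
            using F2[OF na bpm pc[OF k(1)] nk pc[OF k'(1)] False] .
          ultimately have "\<beta> k'' = k''" using S3[OF kc kK] by simp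
          then have "\<beta> (inv k) \<otimes> \<beta> k' = inv k \<otimes> k'" using pm_mult[OF bpm _ k'(1)] k k''_def by simp
          then have "inv k \<otimes> \<beta> k' = inv k \<otimes> k'" using pm_inv[OF bpm k(1)] k(3) by simp
          then show ?thesis using k k' pm_closed[OF bpm k'(1)] by simp
        qed
        then show False using S4 by blast
      qed
      have S6: "\<forall>s\<in>carrier G. \<beta> s = s \<longrightarrow> s \<otimes> s = \<one>"
      proof (intro ballI impI)
        fix s assume s: "s \<in> carrier G" and bs: "\<beta> s = s"
        show "s \<otimes> s = \<one>"
        proof (cases "K s")
          case True then show ?thesis using S3[OF s True S5[OF s True bs]] by simp
        next
          case False
          define t where "t = g1 \<otimes> s"
          have tc: "t \<in> carrier G" using t_def g1 s by simp
          have tK: "K t" using NN[OF g1 s False] t_def by simp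
          have bt: "\<beta> t = t" using pm_mult[OF bpm g1(1) s] bg1 bs t_def by simp
          have tt: "t \<otimes> t = \<one>" using S3[OF tc tK S5[OF tc tK bt]] by simp
          have "g1 \<otimes> s = s \<otimes> g1" using S_comm[OF bpm g1(1) bg1 s bs v0 bv0] .
          then have "t \<otimes> t = (g1 \<otimes> g1) \<otimes> (s \<otimes> s)" using comm_sq g1(1) s t_def by blast
          then show ?thesis using tt g1sq s by simp
        qed
      qed
      have "\<forall>x\<in>carrier G. \<forall>y\<in>carrier G. x \<otimes> y = y \<otimes> x" using L_ab[OF bpm S6] by blast
      then show False using na unfolding nonab_def by blast
    qed
  qed
  have hom: "\<psi> \<in> hom G G"
  proof (rule homI)
    show "\<And>x. x \<in> carrier G \<Longrightarrow> \<psi> x \<in> carrier G" by (rule pc)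
    show "\<And>x y. x \<in> carrier G \<Longrightarrow> y \<in> carrier G \<Longrightarrow> \<psi> (x \<otimes> y) = \<psi> x \<otimes> \<psi> y"
      using R main pc by simp
  qed
  show ?thesis unfolding iso_def using hom bij by simp
qed

lemma main_loc: assumes CCA: "CCA G (carrier G - {\<one>})"
  shows "strongly_CCA G (carrier G - {\<one>})"
  unfolding strongly_CCA_def
proof (intro allI impI)
  fix \<phi> assume cp: "colour_permuting G (carrier G - {\<one>}) \<phi>"
  have bij: "bij_betw \<phi> (carrier G) (carrier G)" using cp unfolding colour_permuting_def cay_aut_def by blast
  have pc: "\<And>x. x \<in> carrier G \<Longrightarrow> \<phi> x \<in> carrier G" using bij_betw_apply[OF bij] .
  define c where "c = \<phi> \<one>"
  have c: "c \<in> carrier G" using pc c_def by simp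
  define \<psi> where "\<psi> x = inv c \<otimes> \<phi> x" for x
  have bij2: "bij_betw \<psi> (carrier G) (carrier G)"
  proof -
    have "bij_betw ((\<lambda>y. inv c \<otimes> y) \<circ> \<phi>) (carrier G) (carrier G)" by (rule bij_betw_trans[OF bij bij_lmult]) (simp add: c)
    moreover have "\<psi> = (\<lambda>x. inv c \<otimes> \<phi> x)" by (rule ext) (simp add: \<psi>_def)
    ultimately show ?thesis by (simp add: comp_def)
  qed
  have cp2: "colour_permuting G (carrier G - {\<one>}) \<psi>"
    unfolding colour_permuting_def cay_aut_def
  proof (intro conjI ballI allI impI)
    show "bij_betw \<psi> (carrier G) (carrier G)" by (rule bij2)
  next
    fix x y assume x: "x \<in> carrier G" and y: "y \<in> carrier G"
    have "\<psi> x = \<psi> y \<longleftrightarrow> x = y" using bij_betw_imp_inj_on[OF bij2] x y unfolding inj_on_def by blast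
    moreover have "\<psi> x \<in> carrier G" "\<psi> y \<in> carrier G" using bij_betw_apply[OF bij2] x y by auto
    ultimately show "cay_adj G (carrier G - {\<one>}) x y = cay_adj G (carrier G - {\<one>}) (\<psi> x) (\<psi> y)"
      unfolding adj_iff using x y by blast
  next
    fix x y u v assume a1: "cay_adj G (carrier G - {\<one>}) x y" and a2: "cay_adj G (carrier G - {\<one>}) u v"
      and a3: "cay_colour G x y = cay_colour G u v"
    have "cay_colour G (\<phi> x) (\<phi> y) = cay_colour G (\<phi> u) (\<phi> v)"
      using cp a1 a2 a3 unfolding colour_permuting_def by blast
    moreover have "x \<in> carrier G" "y \<in> carrier G" "u \<in> carrier G" "v \<in> carrier G" using a1 a2 adj_iff by auto
    ultimately show "cay_colour G (\<psi> x) (\<psi> y) = cay_colour G (\<psi> u) (\<psi> v)"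
      unfolding \<psi>_def using colour_transl c pc by simp
  qed
  have one: "\<psi> \<one> = \<one>" unfolding \<psi>_def c_def using pc by simp
  have iso: "\<psi> \<in> iso G G" by (rule KEY[OF CCA cp2 one])
  have hom: "\<psi> \<in> hom G G" using iso unfolding iso_def by auto
  have bij3: "bij_betw \<psi> (carrier G) (carrier G)" using iso unfolding iso_def by auto
  define d where "d = inv_into (carrier G) \<psi> c"
  have d: "d \<in> carrier G" "\<psi> d = c" using d_def bij_betw_inv_into_right[OF bij3 c] bij_betw_apply[OF bij_betw_inv_into[OF bij3] c] by auto
  show "affine G \<phi>" unfolding affine_def
  proof (intro exI conjI ballI)
    show "\<psi> \<in> iso G G" by (rule iso)
    show "d \<in> carrier G" by (rule d(1))
    fix x assume x: "x \<in> carrier G"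
    have "\<psi> (d \<otimes> x) = \<psi> d \<otimes> \<psi> x" using hom d x unfolding hom_def by simp
    then show "\<phi> x = \<psi> (d \<otimes> x)" using d x c pc unfolding \<psi>_def by simp
  qed
qed

end

theorem corollary5p1:
  fixes G :: "('a, 'b) monoid_scheme"
  assumes "group G"
    and "CCA G (carrier G - {\<one>\<^bsub>G\<^esub>})"
  shows "strongly_CCA G (carrier G - {\<one>\<^bsub>G\<^esub>})"
  using group.main_loc[OF assms(1) assms(2)] .

end
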